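(* Fix $1<s<3/2$ and $z\in\mathbb{D}$, and for $N\ge1$ let \[ J_{N,1}=\int_{\mathcal{U}_N(z)}T_z(x_1)^{4s}K(x_1,x_1)^3\,\mathrm{d}\mu(x_1). \] There exists $c_1(s)>0$ such that for all large enough $N$, \[ |J_{N,1}|\le c_1(s)\frac{(1+|z|)^4}{(1-|z|)^4}e^{(3-2s)N}. \]
   Context: $\mathbb{D}$ is the open unit disk, $\mathrm{d}\mu=\frac{1}{\pi}\mathrm{d}x\,\mathrm{d}y$, $K(z,w)=(1-z\overline{w})^{-2}$. $\varphi_z(x)=\frac{z-x}{1-\overline{z}x}$, $d_{\mathrm{h}}(z,x)=\log\frac{1+|\varphi_z(x)|}{1-|\varphi_z(x)|}$, $T_z(x)=e^{-d_{\mathrm{h}}(z,x)}=\frac{1-|\varphi_z(x)|}{1+|\varphi_z(x)|}$, and $\mathcal{U}_N(z)=\{x\in\mathbb{D}:d_{\mathrm{h}}(z,x)<N\}$. *)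

theory Defs
  imports "HOL-Analysis.Analysis"
begin

text \<open>Unit disk, measure d mu = (1/pi) dx dy (Lebesgue measure on complex scaled by 1/pi).\<close>

definition unit_disk :: "complex set" where
  "unit_disk = ball 0 1"

definition bergK :: "complex \<Rightarrow> complex \<Rightarrow> complex" where
  "bergK z w = 1 / (1 - z * cnj w) ^ 2"

definition mobius :: "complex \<Rightarrow> complex \<Rightarrow> complex" where
  "mobius z x = (z - x) / (1 - cnj z * x)"

definition hdist :: "complex \<Rightarrow> complex \<Rightarrow> real" where
  "hdist z x = ln ((1 + cmod (mobius z x)) / (1 - cmod (mobius z x)))"

definition Tz :: "complex \<Rightarrow> complex \<Rightarrow> real" where
  "Tz z x = (1 - cmod (mobius z x)) / (1 + cmod (mobius z x))"

definition hball :: "real \<Rightarrow> complex \<Rightarrow> complex set" where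
  "hball N z = {x \<in> unit_disk. hdist z x < N}"

definition JN1 :: "real \<Rightarrow> complex \<Rightarrow> real \<Rightarrow> complex" where
  "JN1 s z N = (1 / pi) *\<^sub>R
     (LINT x : hball N z | lborel. (Tz z x powr (4 * s)) *\<^sub>R (bergK x x) ^ 3)"

end

theory Submission
  imports Defs
begin


definition Ek :: "nat \<Rightarrow> complex set" where
  "Ek k = ball 0 1 - ball 0 (sqrt (1 - (1/2)^k))"

lemma Ek_meas: "emeasure lborel (Ek k) = ennreal (pi * (1/2)^k)"
proof -
  have r: "0 \<le> 1 - (1/2::real)^k" by (simp add: power_le_one)
  have sub: "ball (0::complex) (sqrt (1 - (1/2)^k)) \<subseteq> ball 0 1"
  proof -
    have "sqrt (1 - (1/2::real)^k) \<le> 1" using r by simp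
    then show ?thesis by (rule subset_ball)
  qed
  have "emeasure lborel (Ek k) = emeasure lborel (ball (0::complex) 1) - emeasure lborel (ball (0::complex) (sqrt (1 - (1/2)^k)))"
    unfolding Ek_def by (rule emeasure_Diff) (use sub emeasure_lborel_ball_finite in \<open>auto simp: less_top\<close>)
  also have "\<dots> = ennreal pi - ennreal (pi * (1 - (1/2)^k))"
    using r by (simp add: emeasure_ball unit_ball_vol_2)
  also have "\<dots> = ennreal (pi * (1/2)^k)"
    using r by (subst ennreal_minus) (auto simp: algebra_simps)
  finally show ?thesis .
qed

lemma Ek_sets: "Ek k \<in> sets lborel"
  unfolding Ek_def by auto

lemma dyadic_finite:
  fixes p :: real
  assumes "0 < p" "p < 1"
  shows "(\<integral>\<^sup>+ x. (\<Sum>k. ennreal (2 powr (p * (k+1))) * indicator (Ek k) x) \<partial>lborel) < \<infinity>"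
proof -
  have "(\<integral>\<^sup>+ x. (\<Sum>k. ennreal (2 powr (p * (k+1))) * indicator (Ek k) x) \<partial>lborel)
      = (\<Sum>k. \<integral>\<^sup>+ x. ennreal (2 powr (p * (k+1))) * indicator (Ek k) x \<partial>lborel)"
  proof (rule nn_integral_suminf)
    fix k :: nat
    show "(\<lambda>x. ennreal (2 powr (p * (k+1))) * indicator (Ek k) x) \<in> borel_measurable lborel"
      using Ek_sets by measurable
  qed
  also have "\<dots> = (\<Sum>k. ennreal (2 powr (p * (k+1)) * (pi * (1/2)^k)))"
  proof (rule suminf_cong)
    fix k :: nat
    have "(\<integral>\<^sup>+ x. ennreal (2 powr (p * (k+1))) * indicator (Ek k) x \<partial>lborel)
        = ennreal (2 powr (p * (k+1))) * emeasure lborel (Ek k)"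
      by (rule nn_integral_cmult_indicator[OF Ek_sets])
    also have "\<dots> = ennreal (2 powr (p * (k+1))) * ennreal (pi * (1/2)^k)" by (simp only: Ek_meas)
    also have "\<dots> = ennreal (2 powr (p * (k+1)) * (pi * (1/2)^k))" by (rule ennreal_mult'[symmetric]) simp
    finally show "(\<integral>\<^sup>+ x. ennreal (2 powr (p * (k+1))) * indicator (Ek k) x \<partial>lborel)
        = ennreal (2 powr (p * (k+1)) * (pi * (1/2)^k))" .
  qed
  also have "\<dots> = (\<Sum>k. ennreal ((2 powr p * pi) * (2 powr (p - 1))^k))"
  proof -
    have "2 powr (p * (k+1)) * (pi * (1/2)^k) = (2 powr p * pi) * (2 powr (p - 1))^k" for k :: nat
    proof -
      have "2 powr (p * (k+1)) = 2 powr p * (2 powr p)^k"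
      proof -
        have "2 powr (p * (k+1)) = 2 powr (p + p * k)" by (simp add: algebra_simps)
        also have "\<dots> = 2 powr p * 2 powr (p * k)" by (rule powr_add)
        also have "2 powr (p * k) = (2 powr p) powr k" by (simp add: powr_powr)
        also have "\<dots> = (2 powr p)^k" by (simp add: powr_realpow)
        finally show ?thesis .
      qed
      moreover have "(2 powr (p - 1))^k = (2 powr p)^k * (1/2)^k"
        by (simp add: powr_diff power_divide)
      ultimately show ?thesis by simp
    qed
    then show ?thesis by (simp only:)
  qed
  also have "\<dots> < \<infinity>"
  proof -
    have q: "2 powr (p - 1) < 1" using assms by (simp add: powr_less_one)
    have "summable (\<lambda>k::nat. (2 powr p * pi) * (2 powr (p - 1))^k)"
      using q by (intro summable_mult summable_geometric) simp
    then have "(\<Sum>k. ennreal ((2 powr p * pi) * (2 powr (p - 1))^k)) \<noteq> top"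
      by (rule ennreal_suminf_neq_top) simp
    then show ?thesis by (simp add: less_top)
  qed
  finally show ?thesis .
qed



lemma key_id: "(cmod (1 - cnj z * x))^2 - (cmod (z - x))^2 = (1 - (cmod z)^2) * (1 - (cmod x)^2)"
  unfolding cmod_power2 by (simp add: algebra_simps power2_eq_square)

lemma q_lower:
  assumes "cmod z < 1" "cmod x < 1"
  shows "1 - cmod z \<le> cmod (1 - cnj z * x)"
proof -
  have "cmod (cnj z * x) \<le> cmod z"
    using assms by (simp add: norm_mult mult_left_le)
  moreover have "1 - cmod (cnj z * x) \<le> cmod (1 - cnj z * x)"
    using norm_triangle_ineq2[of 1 "cnj z * x"] by simp
  ultimately show ?thesis by linarith
qed

lemma pt_bound:
  fixes s b p N :: real and z x :: complex
  assumes z: "z \<in> unit_disk" and x: "x \<in> hball N z"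
    and s: "0 < s" and b: "0 \<le> b" and bp: "b + p = 6 - 4 * s"
  shows "norm (Tz z x powr (4 * s) *\<^sub>R bergK x x ^ 3)
     \<le> ((1 + cmod z) / (1 - cmod z)) powr (4 * s + b) * exp (b * N) * (1 - (cmod x)^2) powr (- p)"
proof -
  define t where "t = cmod z"
  define w where "w = cmod x"
  define q where "q = cmod (1 - cnj z * x)"
  define m where "m = cmod (mobius z x)"
  define A where "A = (1 + t) / (1 - t)"
  define u where "u = 1 - w^2"
  have t: "0 \<le> t" "t < 1" using z by (auto simp: t_def unit_disk_def)
  have w: "0 \<le> w" "w < 1" using x by (auto simp: w_def hball_def unit_disk_def)
  have hd: "hdist z x < N" using x by (auto simp: hball_def)
  have q: "1 - t \<le> q" using q_lower[of z x] t w by (simp add: t_def w_def q_def)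
  have qpos: "0 < q" using q t by linarith
  have m_eq: "m = cmod (z - x) / q"
    by (simp add: m_def mobius_def q_def norm_divide)
  have id: "q^2 - (cmod (z - x))^2 = (1 - t^2) * u"
    using key_id[of z x] by (simp add: q_def t_def u_def w_def)
  have u: "0 < u" "u \<le> 1" using w by (auto simp: u_def power_less_one_iff abs_square_less_1)
  have m0: "0 \<le> m" by (simp add: m_def)
  have m2: "1 - m^2 = (1 - t^2) * u / q^2"
    using id qpos by (simp add: m_eq power_divide field_simps)
  have tt: "0 < 1 - t^2" using t by (simp add: abs_square_less_1)
  have m1: "m < 1"
  proof -
    have "0 < 1 - m^2" using m2 tt u qpos by simp
    then have "m^2 < 1" by simp
    then show ?thesis using m0 by (simp add: abs_square_less_1)
  qed
  have Apos: "0 < A" "1 \<le> A" using t by (auto simp: A_def field_simps)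
  have T_def': "Tz z x = (1 - m) / (1 + m)" by (simp add: Tz_def m_def)
  have Tpos: "0 < Tz z x" using m0 m1 by (simp add: T_def')
  have T_le: "Tz z x \<le> 1 - m^2"
  proof -
    have "1 \<le> (1 + m)^2" using m0 by (intro one_le_power) simp
    then have "(1 - m) * 1 \<le> (1 - m) * (1 + m)^2" using m1
      by (intro mult_left_mono) auto
    moreover have "(1 - m^2) * (1 + m) = (1 - m) * (1 + m)^2" by (simp add: power2_eq_square algebra_simps)
    ultimately have "1 - m \<le> (1 - m^2) * (1 + m)" by simp
    then show ?thesis using m0 by (simp add: T_def' pos_divide_le_eq)
  qed
  have m2_le: "1 - m^2 \<le> A * u"
  proof -
    have "(1 - t^2) * u / q^2 \<le> (1 - t^2) * u / (1 - t)^2"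
      using q t tt u by (intro divide_left_mono mult_nonneg_nonneg power_mono mult_pos_pos) auto
    also have "\<dots> = ((1+t)*(1-t)) * u / ((1-t)*(1-t))" by (simp add: power2_eq_square algebra_simps)
    also have "\<dots> = A * u" using t by (simp add: A_def)
    finally show ?thesis using m2 by simp
  qed
  have m_N: "exp (- N) < 1 - m"
  proof -
    have pos: "0 < (1 + m) / (1 - m)" using m0 m1 by simp
    have "ln ((1 + m) / (1 - m)) < N" using hd by (simp add: hdist_def m_def)
    then have "exp (ln ((1 + m) / (1 - m))) < exp N" by (simp only: exp_less_cancel_iff)
    then have "(1 + m) / (1 - m) < exp N" using pos by (simp only: exp_ln)
    then have "1 + m < exp N * (1 - m)" using m1 by (simp add: divide_less_eq)
    then have "1 < exp N * (1 - m)" using m0 by linarith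
    then show ?thesis by (simp add: exp_minus field_simps)
  qed
  have u_low: "exp (- N) / A \<le> u"
  proof -
    have "m * m \<le> m * 1" using m0 m1 by (intro mult_left_mono) auto
    then have "1 - m \<le> 1 - m^2" by (simp add: power2_eq_square)
    then have "exp (-N) \<le> A * u" using m_N m2_le by linarith
    then show ?thesis using Apos by (simp add: divide_le_eq mult.commute)
  qed
  have K: "bergK x x = complex_of_real (1 / u^2)"
  proof -
    have "x * cnj x = complex_of_real (w^2)" using complex_norm_square[of x] by (simp add: w_def)
    then show ?thesis by (simp add: bergK_def u_def)
  qed
  have nrm: "norm (Tz z x powr (4 * s) *\<^sub>R bergK x x ^ 3) = Tz z x powr (4 * s) * u powr (-6)"
  proof -
    have "norm (bergK x x ^ 3) = \<bar>1 / u^2\<bar> ^ 3" unfolding K norm_power norm_of_real ..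
    also have "\<dots> = inverse (u ^ 2) ^ 3" using u by (simp add: divide_inverse)
    also have "\<dots> = inverse (u ^ 6)" by (simp add: power_inverse flip: power_mult)
    also have "\<dots> = u powr (-6)" using u by (simp add: powr_minus powr_numeral)
    finally show ?thesis by simp
  qed
  have "Tz z x powr (4 * s) \<le> (A * u) powr (4 * s)"
    using Tpos T_le m2_le s by (intro powr_mono2) auto
  also have "\<dots> = A powr (4 * s) * u powr (4 * s)" using Apos u by (simp add: powr_mult)
  finally have T4: "Tz z x powr (4 * s) \<le> A powr (4 * s) * u powr (4 * s)" .
  have ub: "u powr (- b) \<le> (exp (- N) / A) powr (- b)"
    using u_low b Apos u by (intro powr_mono2') auto
  also have "\<dots> = A powr b * exp (b * N)"
  proof -
    have "(exp (- N) / A) powr (- b) = exp (- b * ln (exp (- N) / A))" using Apos by (simp add: powr_def)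
    also have "ln (exp (- N) / A) = - N - ln A" using Apos by (simp add: ln_div)
    also have "exp (- b * (- N - ln A)) = exp (b * ln A) * exp (b * N)"
      by (simp add: exp_add[symmetric] algebra_simps)
    also have "\<dots> = A powr b * exp (b * N)" using Apos by (simp add: powr_def)
    finally show ?thesis .
  qed
  finally have ub: "u powr (- b) \<le> A powr b * exp (b * N)" .
  have "Tz z x powr (4 * s) * u powr (-6) \<le> A powr (4 * s) * u powr (4 * s) * u powr (-6)"
    using T4 u by (intro mult_right_mono) auto
  also have "\<dots> = A powr (4 * s) * u powr (- b) * u powr (- p)"
  proof -
    have e: "s * 4 - 6 = - b - p" using bp by linarith
    show ?thesis using u by (simp add: powr_add[symmetric] e algebra_simps)
  qed
  also have "\<dots> \<le> A powr (4 * s) * (A powr b * exp (b * N)) * u powr (- p)"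
    using ub Apos u by (intro mult_right_mono mult_left_mono) auto
  also have "\<dots> = A powr (4 * s + b) * exp (b * N) * u powr (- p)"
    using Apos by (simp add: powr_add)
  finally show ?thesis using nrm Tpos by (simp add: A_def t_def u_def w_def)
qed



lemma dyadic_pt:
  fixes p :: real and x :: complex
  assumes p: "0 < p" and x: "cmod x < 1"
  shows "ennreal ((1 - (cmod x)^2) powr (- p)) \<le> (\<Sum>k. ennreal (2 powr (p * (k+1))) * indicator (Ek k) x)"
proof -
  define u where "u = 1 - (cmod x)^2"
  have u: "0 < u" "u \<le> 1" using x by (auto simp: u_def abs_square_less_1)
  have ex: "\<exists>n::nat. (1/2::real)^n < u" using u by (intro real_arch_pow_inv) auto
  define n where "n = (LEAST n::nat. (1/2::real)^n < u)"
  have n1: "(1/2::real)^n < u" unfolding n_def by (rule LeastI_ex[OF ex])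
  have n0: "n \<noteq> 0"
  proof
    assume "n = 0" with n1 u show False by simp
  qed
  then obtain K where K: "n = Suc K" by (cases n) auto
  have "\<not> (1/2::real)^K < u" unfolding n_def
    by (rule not_less_Least) (use K n_def in simp)
  then have uK: "u \<le> (1/2)^K" by simp
  have xE: "x \<in> Ek K"
  proof -
    have "1 - (1/2)^K \<le> (cmod x)^2" using uK by (simp add: u_def)
    then have "sqrt (1 - (1/2)^K) \<le> sqrt ((cmod x)^2)" by (rule real_sqrt_le_mono)
    then have "sqrt (1 - (1/2)^K) \<le> cmod x" by simp
    then show ?thesis using x by (simp add: Ek_def)
  qed
  have "u powr (- p) \<le> ((1/2)^n) powr (- p)"
    using n1 p by (intro powr_mono2') auto
  also have "\<dots> = 2 powr (p * (K + 1))"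
  proof -
    have "((1/2::real)^n) powr (- p) = ((1/2) powr n) powr (- p)" by (simp add: powr_realpow)
    also have "\<dots> = (1/2) powr (- (p * n))" by (simp add: powr_powr mult.commute)
    also have "\<dots> = 2 powr (p * n)" by (simp add: powr_minus powr_divide)
    finally show ?thesis using K by simp
  qed
  finally have "ennreal (u powr (- p)) \<le> ennreal (2 powr (p * (K+1))) * indicator (Ek K) x"
    using xE by (simp add: ennreal_leI)
  also have "\<dots> \<le> (\<Sum>k. ennreal (2 powr (p * (k+1))) * indicator (Ek k) x)"
  proof -
    define f where "f = (\<lambda>k::nat. ennreal (2 powr (p * real (k+1))) * indicator (Ek k) x)"
    have "f K \<le> (\<Sum>k. f k)" by (meson ennreal_suminf_lessD not_le less_irrefl)
    then show ?thesis by (simp only: f_def)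
  qed
  finally show ?thesis by (simp only: u_def)
qed


lemma norm_J_bound:
  fixes s p b :: real and z :: complex
  assumes z: "z \<in> unit_disk" and s: "0 < s" and b: "0 \<le> b" and bp: "b + p = 6 - 4 * s"
    and p: "0 < p" "p < 1"
  shows "norm (JN1 s z N) \<le> (1 / pi) * (((1 + cmod z) / (1 - cmod z)) powr (4 * s + b) * exp (b * N)
      * enn2real (\<integral>\<^sup>+ x. (\<Sum>k. ennreal (2 powr (p * (k+1))) * indicator (Ek k) x) \<partial>lborel))"
proof -
  define M where "M = ((1 + cmod z) / (1 - cmod z)) powr (4 * s + b) * exp (b * N)"
  define G where "G = (\<lambda>x. (\<Sum>k. ennreal (2 powr (p * (k+1))) * indicator (Ek k) x))"
  define I where "I = enn2real (\<integral>\<^sup>+ x. G x \<partial>lborel)"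
  define f where "f = (\<lambda>x. indicator (hball N z) x *\<^sub>R (Tz z x powr (4 * s) *\<^sub>R bergK x x ^ 3))"
  have M0: "0 \<le> M" by (simp add: M_def)
  have I0: "0 \<le> I" by (simp add: I_def)
  have fin: "(\<integral>\<^sup>+ x. G x \<partial>lborel) = ennreal I"
    using dyadic_finite[OF p] by (simp add: I_def G_def ennreal_enn2real less_top)
  have Gm: "G \<in> borel_measurable lborel"
    unfolding G_def using Ek_sets by measurable
  have main: "norm (integral\<^sup>L lborel f) \<le> M * I"
  proof (cases "integrable lborel f")
    case True
    have "ennreal (norm (integral\<^sup>L lborel f)) \<le> (\<integral>\<^sup>+ x. norm (f x) \<partial>lborel)"
      by (rule integral_norm_bound_ennreal[OF True])
    also have "\<dots> \<le> (\<integral>\<^sup>+ x. ennreal M * G x \<partial>lborel)"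
    proof (rule nn_integral_mono)
      fix x
      show "ennreal (norm (f x)) \<le> ennreal M * G x"
      proof (cases "x \<in> hball N z")
        case True
        have xd: "cmod x < 1" using True by (auto simp: hball_def unit_disk_def)
        have "norm (f x) \<le> M * (1 - (cmod x)^2) powr (- p)"
          using pt_bound[OF z True s b bp] True by (simp add: f_def M_def)
        then have "ennreal (norm (f x)) \<le> ennreal M * ennreal ((1 - (cmod x)^2) powr (- p))"
          by (simp add: ennreal_mult[symmetric] M0 ennreal_leI)
        also have "\<dots> \<le> ennreal M * G x"
          unfolding G_def by (intro mult_left_mono dyadic_pt[OF p(1) xd]) auto
        finally show ?thesis .
      qed (simp add: f_def)
    qed
    also have "\<dots> = ennreal M * (\<integral>\<^sup>+ x. G x \<partial>lborel)"
      by (rule nn_integral_cmult[OF Gm])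
    also have "\<dots> = ennreal (M * I)" using fin M0 I0 by (simp add: ennreal_mult)
    finally have "ennreal (norm (integral\<^sup>L lborel f)) \<le> ennreal (M * I)" .
    then show ?thesis by (subst (asm) ennreal_le_iff) (use M0 I0 in auto)
  next
    case False
    have "integral\<^sup>L lborel f = 0" by (rule not_integrable_integral_eq[OF False])
    then show ?thesis using M0 I0 by simp
  qed
  have "norm (JN1 s z N) = (1 / pi) * norm (integral\<^sup>L lborel f)"
    unfolding JN1_def set_lebesgue_integral_def f_def by simp
  also have "\<dots> \<le> (1 / pi) * (M * I)" using main by (simp add: divide_right_mono)
  finally show ?thesis by (simp only: M_def I_def G_def)
qed

theorem lemma3p1:
  fixes s :: real
  assumes "1 < s" and "s < 3 / 2"
  shows "\<exists>c1 > 0. \<forall>z \<in> unit_disk. \<forall>\<^sub>F N in at_top.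
           norm (JN1 s z N) \<le> c1 * (1 + cmod z) ^ 4 / (1 - cmod z) ^ 4 * exp ((3 - 2 * s) * N)"
proof (intro exI[of _ 1] conjI ballI)
  fix z assume z: "z \<in> unit_disk"
  define p where "p = (3 - 2 * s + min 1 (6 - 4 * s)) / 2"
  define b where "b = 6 - 4 * s - p"
  have p: "0 < p" "p < 1" and b: "0 \<le> b" "b < 3 - 2 * s" and bp: "b + p = 6 - 4 * s"
  proof -
    define mm where "mm = min 1 (6 - 4 * s)"
    have m1: "mm \<le> 1" "mm \<le> 6 - 4 * s" "3 - 2 * s < mm" using assms by (auto simp: mm_def)
    have pe: "2 * p = 3 - 2 * s + mm" by (simp add: p_def mm_def)
    show "0 < p" using pe m1 assms by linarith
    show "p < 1" using pe m1 assms by linarith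
    show "0 \<le> b" using pe m1 assms b_def by linarith
    show "b < 3 - 2 * s" using pe m1 assms b_def by linarith
    show "b + p = 6 - 4 * s" using b_def by linarith
  qed
  define t where "t = cmod z"
  have t: "0 \<le> t" "t < 1" using z by (auto simp: t_def unit_disk_def)
  define A where "A = (1 + t) / (1 - t)"
  have A1: "1 \<le> A" using t by (simp add: A_def field_simps)
  define I where "I = enn2real (\<integral>\<^sup>+ x. (\<Sum>k. ennreal (2 powr (p * (k+1))) * indicator (Ek k) x) \<partial>lborel)"
  define C where "C = (1 / pi) * A powr (4 * s + b) * I"
  have C0: "0 \<le> C" by (simp add: C_def I_def)
  define d where "d = 3 - 2 * s - b"
  have d: "0 < d" using b by (simp add: d_def)
  show "\<forall>\<^sub>F N in at_top. norm (JN1 s z N) \<le> 1 * (1 + cmod z) ^ 4 / (1 - cmod z) ^ 4 * exp ((3 - 2 * s) * N)"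
    using eventually_ge_at_top[of "ln (C + 1) / d"]
  proof eventually_elim
    case (elim N)
    have "ln (C + 1) \<le> d * N" using elim d by (simp add: pos_divide_le_eq mult.commute)
    then have "C + 1 \<le> exp (d * N)" using C0 by (metis add_nonneg_pos exp_le_cancel_iff exp_ln zero_less_one)
    then have CN: "C \<le> exp (d * N)" by simp
    have "norm (JN1 s z N) \<le> C * exp (b * N)"
    proof -
      have eq: "(1/pi) * (X * E * Y) = ((1/pi) * X * Y) * E" for X E Y :: real by (simp add: mult_ac)
      have "0 < s" using assms by simp
      from norm_J_bound[OF z this b(1) bp p, of N] show ?thesis
        unfolding eq by (simp only: C_def A_def t_def I_def)
    qed
    also have "\<dots> \<le> exp (d * N) * exp (b * N)" using CN by (simp add: mult_right_mono)
    also have "\<dots> = exp ((3 - 2 * s) * N)" by (simp add: d_def exp_add[symmetric] algebra_simps)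
    also have "\<dots> \<le> A ^ 4 * exp ((3 - 2 * s) * N)"
      using A1 by (simp add: one_le_power)
    also have "\<dots> = 1 * (1 + cmod z) ^ 4 / (1 - cmod z) ^ 4 * exp ((3 - 2 * s) * N)"
      by (simp add: A_def t_def power_divide)
    finally show ?case .
  qed
qed simp


end
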